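(* Let $L_x, L_y>0$, $L_{xy}\geq 0$, $\mu_x,\mu_y$ with $0<\mu_x\le L_x$, $0<\mu_y\le L_y$, and let $F\in\mathcal{F}(L_x, L_y, L_{xy}, \mu_x, \mu_y)$ (defined in the context). Let $(x^\star,y^\star)$ be the unique saddle point of $F$. Set $L=\max\{L_x, L_y\}$ and $\mu=\min\{\mu_x, \mu_y\}$. If $t\in\left(0, \tfrac{2\mu}{\mu L+L_{xy}^2}\right)$, then for any $(x^1,y^1)\in\mathbb{R}^n\times\mathbb{R}^m$, the point $(x^2,y^2)$ obtained by one step of the gradient descent-ascent method with step length $t$, i.e. $x^{2}=x^1-t\nabla_x F(x^1, y^1)$, $y^{2}=y^1+t\nabla_y F(x^1, y^1)$, satisfies $$ \|x^2-x^\star\|^2+\|y^2-y^\star\|^2\leq \alpha\left(\|x^1-x^\star\|^2+\|y^1-y^\star\|^2\right), $$ where $$ \alpha=1+\tfrac{1}{2}\left(L^2+\mu^2+2L_{xy}^2\right)t^2-(L+\mu)t +\tfrac{1}{2}(L-\mu)t\sqrt{(Lt + \mu t - 2)^2 + 4L_{xy}^2t^2}. $$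
   Context: $F:\mathbb{R}^n\times\mathbb{R}^m\to\mathbb{R}$ is differentiable. $\mathcal{F}(L_x, L_y, L_{xy}, \mu_x, \mu_y)$ denotes the set of such $F$ satisfying, for all $x,x_1,x_2\in\mathbb{R}^n$, $y,y_1,y_2\in\mathbb{R}^m$: $\|\nabla_x F(x_2, y)-\nabla_x F(x_1, y)\|\leq L_x\|x_2-x_1\|$; $\|\nabla_y F(x, y_2)-\nabla_y F(x, y_1)\|\leq L_y\|y_2-y_1\|$; $\|\nabla_x F(x, y_2)-\nabla_x F(x, y_1)\|\leq L_{xy}\|y_2-y_1\|$; $\|\nabla_y F(x_2, y)-\nabla_y F(x_1, y)\|\leq L_{xy}\|x_2-x_1\|$; and $F(\cdot, y)-\tfrac{\mu_x}{2}\|\cdot\|^2$ is convex for every $y$ and $F(x,\cdot)+\tfrac{\mu_y}{2}\|\cdot\|^2$ is concave for every $x$. A saddle point is $(x^\star,y^\star)$ with $F(x^\star, y)\leq F(x^\star, y^\star)\leq F(x, y^\star)$ for all $x,y$; when $\mu_x,\mu_y>0$ it exists and is unique. *)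

theory Defs
  imports "HOL-Analysis.Analysis"
begin

definition grad_x :: "('n::euclidean_space \<Rightarrow> 'm::euclidean_space \<Rightarrow> real) \<Rightarrow> 'n \<Rightarrow> 'm \<Rightarrow> 'n" where
  "grad_x F x y = (THE g. ((\<lambda>u. F u y) has_derivative (\<lambda>h. g \<bullet> h)) (at x))"

definition grad_y :: "('n::euclidean_space \<Rightarrow> 'm::euclidean_space \<Rightarrow> real) \<Rightarrow> 'n \<Rightarrow> 'm \<Rightarrow> 'm" where
  "grad_y F x y = (THE g. ((\<lambda>v. F x v) has_derivative (\<lambda>h. g \<bullet> h)) (at y))"

definition func_class ::
  "real \<Rightarrow> real \<Rightarrow> real \<Rightarrow> real \<Rightarrow> real \<Rightarrow> ('n::euclidean_space \<Rightarrow> 'm::euclidean_space \<Rightarrow> real) set" where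
  "func_class Lx Ly Lxy mux muy = {F.
     (\<forall>p. (\<lambda>(x, y). F x y) differentiable (at p)) \<and>
     (\<forall>x1 x2 y. norm (grad_x F x2 y - grad_x F x1 y) \<le> Lx * norm (x2 - x1)) \<and>
     (\<forall>x y1 y2. norm (grad_y F x y2 - grad_y F x y1) \<le> Ly * norm (y2 - y1)) \<and>
     (\<forall>x y1 y2. norm (grad_x F x y2 - grad_x F x y1) \<le> Lxy * norm (y2 - y1)) \<and>
     (\<forall>x1 x2 y. norm (grad_y F x2 y - grad_y F x1 y) \<le> Lxy * norm (x2 - x1)) \<and>
     (\<forall>y. convex_on UNIV (\<lambda>x. F x y - mux / 2 * (norm x)\<^sup>2)) \<and>
     (\<forall>x. concave_on UNIV (\<lambda>y. F x y + muy / 2 * (norm y)\<^sup>2))}"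

definition is_saddle_point :: "('n \<Rightarrow> 'm \<Rightarrow> real) \<Rightarrow> 'n \<Rightarrow> 'm \<Rightarrow> bool" where
  "is_saddle_point F xs ys \<longleftrightarrow> (\<forall>x y. F xs y \<le> F xs ys \<and> F xs ys \<le> F x ys)"

end

theory Submission
  imports Defs
begin


lemma linear_rep:
  fixes D :: "'a::euclidean_space \<Rightarrow> real"
  assumes "linear D"
  shows "D = (\<lambda>h. (\<Sum>i\<in>Basis. D i *\<^sub>R i) \<bullet> h)"
proof
  fix h :: 'a
  have "D h = D (\<Sum>i\<in>Basis. (h \<bullet> i) *\<^sub>R i)" by (simp add: euclidean_representation)
  also have "\<dots> = (\<Sum>i\<in>Basis. (h \<bullet> i) * D i)"
    using assms by (simp add: linear_sum linear_scale o_def)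
  also have "\<dots> = (\<Sum>i\<in>Basis. (D i *\<^sub>R i) \<bullet> h)"
    by (rule sum.cong) (simp_all add: inner_commute)
  also have "\<dots> = (\<Sum>i\<in>Basis. D i *\<^sub>R i) \<bullet> h"
    by (simp add: inner_sum_left)
  finally show "D h = (\<Sum>i\<in>Basis. D i *\<^sub>R i) \<bullet> h" .
qed

lemma grad_the:
  fixes f :: "'a::euclidean_space \<Rightarrow> real"
  assumes "(f has_derivative D) (at x)"
  shows "(f has_derivative (\<lambda>h. (THE g. (f has_derivative (\<lambda>h. g \<bullet> h)) (at x)) \<bullet> h)) (at x)"
proof -
  have lin: "linear D" using assms has_derivative_bounded_linear bounded_linear.linear by blast
  define g0 where "g0 = (\<Sum>i\<in>Basis. D i *\<^sub>R i)"
  have d0: "(f has_derivative (\<lambda>h. g0 \<bullet> h)) (at x)"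
    using assms linear_rep[OF lin] unfolding g0_def by simp
  have "(THE g. (f has_derivative (\<lambda>h. g \<bullet> h)) (at x)) = g0"
  proof (rule the_equality)
    show "(f has_derivative (\<lambda>h. g0 \<bullet> h)) (at x)" by (fact d0)
    fix g assume "(f has_derivative (\<lambda>h. g \<bullet> h)) (at x)"
    then have "(\<lambda>h. g \<bullet> h) = (\<lambda>h. g0 \<bullet> h)" using has_derivative_unique d0 by blast
    then have "g \<bullet> (g - g0) = g0 \<bullet> (g - g0)" by metis
    then have "(g - g0) \<bullet> (g - g0) = 0" by (simp add: inner_diff_left)
    then show "g = g0" by simp
  qed
  then show ?thesis using d0 by simp
qed

lemma descent:
  fixes f :: "'a::real_inner \<Rightarrow> real"
  assumes deriv: "\<And>x. (f has_derivative (\<lambda>h. g x \<bullet> h)) (at x)"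
    and lip: "\<And>x y. norm (g x - g y) \<le> L * norm (x - y)"
  shows "f z \<le> f x + g x \<bullet> (z - x) + L/2 * norm (z - x)^2"
proof -
  define d where "d = z - x"
  define \<psi> where "\<psi> = (\<lambda>s::real. f (x + s *\<^sub>R d) - s * (g x \<bullet> d) - L/2 * s^2 * norm d ^2)"
  have der: "(\<psi> has_real_derivative (g (x + s *\<^sub>R d) \<bullet> d - g x \<bullet> d - L * s * norm d^2)) (at s)" for s
  proof -
    have "((\<lambda>s. x + s *\<^sub>R d) has_derivative (\<lambda>h. h *\<^sub>R d)) (at s)"
      by (intro derivative_eq_intros) auto
    then have "((\<lambda>s. f (x + s *\<^sub>R d)) has_derivative (\<lambda>h. g (x + s *\<^sub>R d) \<bullet> (h *\<^sub>R d))) (at s)"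
      using has_derivative_compose[OF _ deriv] by blast
    then have fd: "((\<lambda>s. f (x + s *\<^sub>R d)) has_real_derivative (g (x + s *\<^sub>R d) \<bullet> d)) (at s)"
      unfolding has_field_derivative_def by (rule has_derivative_eq_rhs) (simp add: fun_eq_iff)
    show ?thesis unfolding \<psi>_def
      by (rule derivative_eq_intros fd refl | simp)+
  qed
  have "\<psi> 1 \<le> \<psi> 0"
  proof (rule DERIV_nonpos_imp_nonincreasing[of 0 1 \<psi>])
    fix s :: real assume s: "0 \<le> s" "s \<le> 1"
    have "g (x + s *\<^sub>R d) \<bullet> d - g x \<bullet> d = (g (x + s *\<^sub>R d) - g x) \<bullet> d" by (simp add: inner_diff_left)
    also have "\<dots> \<le> norm (g (x + s *\<^sub>R d) - g x) * norm d" by (rule norm_cauchy_schwarz)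
    also have "\<dots> \<le> L * norm (s *\<^sub>R d) * norm d"
      using lip[of "x + s *\<^sub>R d" x] by (simp add: mult_right_mono)
    also have "\<dots> = L * s * norm d^2" using s by (simp add: power2_eq_square)
    finally show "\<exists>y. (\<psi> has_real_derivative y) (at s) \<and> y \<le> 0"
      using der[of s] by (intro exI[of _ "g (x + s *\<^sub>R d) \<bullet> d - g x \<bullet> d - L * s * norm d^2"]) auto
  qed simp
  then show ?thesis unfolding \<psi>_def d_def by (simp add: algebra_simps)
qed

lemma convex_tangent:
  fixes h :: "'a::real_normed_vector \<Rightarrow> real"
  assumes cvx: "convex_on UNIV h" and der: "(h has_derivative G) (at y)"
  shows "h y + G (z - y) \<le> h z"
proof -
  define d where "d = z - y"
  define \<psi> where "\<psi> = (\<lambda>s::real. h (y + s *\<^sub>R d))"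
  have lin: "bounded_linear G" using der has_derivative_bounded_linear by blast
  have cv: "convex_on UNIV \<psi>"
    unfolding convex_on_def
  proof (intro conjI ballI allI impI)
    fix x1 x2 u v :: real assume uv: "0 \<le> u" "0 \<le> v" "u + v = 1"
    have "y + (u *\<^sub>R x1 + v *\<^sub>R x2) *\<^sub>R d = u *\<^sub>R (y + x1 *\<^sub>R d) + v *\<^sub>R (y + x2 *\<^sub>R d)"
      using uv by (simp add: algebra_simps flip: scaleR_add_left)
    then show "\<psi> (u *\<^sub>R x1 + v *\<^sub>R x2) \<le> u * \<psi> x1 + v * \<psi> x2"
      unfolding \<psi>_def using cvx uv unfolding convex_on_def by simp
  qed simp
  have "((\<lambda>s. y + s *\<^sub>R d) has_derivative (\<lambda>s. s *\<^sub>R d)) (at 0)"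
    by (intro derivative_eq_intros) auto
  then have "(\<psi> has_derivative (\<lambda>s. G (s *\<^sub>R d))) (at 0)"
    unfolding \<psi>_def using has_derivative_compose[of "\<lambda>s. y + s *\<^sub>R d" _ 0 UNIV h G] der by simp
  then have "(\<psi> has_real_derivative G d) (at 0 within UNIV)"
    unfolding has_field_derivative_def
    by (rule has_derivative_eq_rhs) (simp add: fun_eq_iff linear_cmul[OF bounded_linear.linear[OF lin]] mult.commute)
  from convex_on_imp_above_tangent[OF cv _ _ _ this, of 1]
  have "G d * (1 - 0) \<le> \<psi> 1 - \<psi> 0" by simp
  then show ?thesis unfolding \<psi>_def d_def by simp
qed

lemma strong_first:
  fixes f :: "'a::real_inner \<Rightarrow> real"
  assumes cvx: "convex_on UNIV (\<lambda>x. f x - m/2 * (norm x)^2)"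
    and der: "\<And>x. (f has_derivative (\<lambda>h. g x \<bullet> h)) (at x)"
  shows "f x + g x \<bullet> (z - x) + m/2 * norm (z - x)^2 \<le> f z"
proof -
  have e: "(\<lambda>x. f x - m/2 * (norm x)^2) = (\<lambda>x. f x - m/2 * (x \<bullet> x))"
    by (simp add: power2_norm_eq_inner)
  have "((\<lambda>x. f x - m/2 * (x \<bullet> x)) has_derivative (\<lambda>h. g x \<bullet> h - m/2 * (h \<bullet> x + x \<bullet> h))) (at x)"
    using der by (auto intro!: derivative_eq_intros)
  from convex_tangent[OF cvx[unfolded e] this, of z]
  have "f x - m / 2 * (x \<bullet> x) + (g x \<bullet> (z - x) - m / 2 * ((z - x) \<bullet> x + x \<bullet> (z - x))) \<le> f z - m / 2 * (z \<bullet> z)" .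
  then show ?thesis
    by (simp add: power2_norm_eq_inner inner_diff_left inner_diff_right inner_commute algebra_simps)
qed

lemma GL:
  fixes f :: "'a::real_inner \<Rightarrow> real"
  assumes deriv: "\<And>x. (f has_derivative (\<lambda>h. g x \<bullet> h)) (at x)"
    and lip: "\<And>x y. norm (g x - g y) \<le> L * norm (x - y)"
    and sc: "\<And>x z. f x + g x \<bullet> (z - x) + m/2 * norm (z - x)^2 \<le> f z"
    and mL: "m \<le> L"
  shows "0 \<le> 2*(L-m)*(f x - f y - g y \<bullet> (x - y)) - (L-m)*m*((x-y)\<bullet>(x-y))
              - (g x - g y - m *\<^sub>R (x-y)) \<bullet> (g x - g y - m *\<^sub>R (x-y))"
proof -
  define K where "K = L - m"
  define B where "B = 2*(f x - f y - g y \<bullet> (x - y)) - m * ((x-y)\<bullet>(x-y))"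
  define G where "G = g x - g y - m *\<^sub>R (x - y)"
  have key: "(2*r - K * r^2) * (G \<bullet> G) \<le> B" if r: "r \<ge> 0" for r
  proof -
    define z where "z = x - r *\<^sub>R G"
    have 1: "f y + g y \<bullet> (z - y) + m/2 * norm (z - y)^2 \<le> f z" by (rule sc)
    have 2: "f z \<le> f x + g x \<bullet> (z - x) + L/2 * norm (z - x)^2" by (rule descent[OF deriv lip])
    have eq: "B - (2*r - K * r^2) * (G \<bullet> G)
       = (2*f x + 2*(g x \<bullet> (z - x)) + L * ((z - x) \<bullet> (z - x))) - (2*f y + 2*(g y \<bullet> (z - y)) + m * ((z - y) \<bullet> (z - y)))"
      unfolding B_def K_def z_def G_def
      by (simp add: inner_simps inner_commute algebra_simps power2_eq_square)
    show ?thesis using 1 2 eq by (simp add: power2_norm_eq_inner)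
  qed
  have K0: "K \<ge> 0" using mL unfolding K_def by simp
  have "G \<bullet> G \<le> K * B"
  proof (cases "K > 0")
    case True
    have "(2*(1/K) - K * (1/K)^2) * (G \<bullet> G) \<le> B" using key[of "1/K"] True by simp
    moreover have "2*(1/K) - K * (1/K)^2 = 1/K" using True by (simp add: field_simps power2_eq_square)
    ultimately have "(G \<bullet> G) / K \<le> B" by simp
    then show ?thesis using True by (simp add: field_simps)
  next
    case False
    then have K: "K = 0" using K0 by simp
    have "G \<bullet> G = 0"
    proof (rule ccontr)
      assume ne: "G \<bullet> G \<noteq> 0"
      then have gp: "G \<bullet> G > 0" by (simp add: order_less_le)
      have "(2*((\<bar>B\<bar> + 1) / (G \<bullet> G))) * (G \<bullet> G) \<le> B"
        using key[of "(\<bar>B\<bar> + 1) / (G \<bullet> G)"] K gp by simp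
      then show False using gp by simp
    qed
    then show ?thesis using K by simp
  qed
  then show ?thesis unfolding B_def G_def K_def by (simp add: algebra_simps)
qed



lemma core_identity:
  fixes a P M q :: "'a::real_inner" and b R N s :: "'b::real_inner"
    and Sq u K t \<beta> \<mu> D1 D2 D3 D4 E1 E2 E3 E4 :: real
  assumes u_def: "u = K*t - 2*\<beta>"
    and D2: "D2 = \<mu>*(a\<bullet>a) + a\<bullet>P - D1" and D4: "D4 = \<mu>*(a\<bullet>a) + a\<bullet>M - D3"
    and E2: "E2 = \<mu>*(b\<bullet>b) + b\<bullet>R - E1" and E4: "E4 = \<mu>*(b\<bullet>b) + b\<bullet>N - E3"
    and cyc: "E3 = a\<bullet>q - b\<bullet>s - D3 + D1 + E1"
  shows "2*K*Sq*((4*\<beta>^2 + 2*K*t*(u+Sq) + (Sq^2 - u^2))*(a\<bullet>a + b\<bullet>b)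
      - 4*((\<beta> *\<^sub>R a - t *\<^sub>R P - t *\<^sub>R q)\<bullet>(\<beta> *\<^sub>R a - t *\<^sub>R P - t *\<^sub>R q)
         + (\<beta> *\<^sub>R b - t *\<^sub>R R + t *\<^sub>R s)\<bullet>(\<beta> *\<^sub>R b - t *\<^sub>R R + t *\<^sub>R s)))
    = 2*t*(Sq+K*t)*(Sq+u)*((2*K*D1 - K*\<mu>*(a\<bullet>a) - P\<bullet>P) + (2*K*D4 - K*\<mu>*(a\<bullet>a) - M\<bullet>M)
         + (2*K*E1 - K*\<mu>*(b\<bullet>b) - R\<bullet>R) + (2*K*E4 - K*\<mu>*(b\<bullet>b) - N\<bullet>N))
    + 2*t*(Sq+K*t)*(Sq-u)*((2*K*D2 - K*\<mu>*(a\<bullet>a) - P\<bullet>P) + (2*K*D3 - K*\<mu>*(a\<bullet>a) - M\<bullet>M)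
         + (2*K*E2 - K*\<mu>*(b\<bullet>b) - R\<bullet>R) + (2*K*E3 - K*\<mu>*(b\<bullet>b) - N\<bullet>N))
    + K*(Sq+K*t)*(((Sq^2 - u^2)*(b\<bullet>b) - 4*t^2*(q\<bullet>q)) + ((Sq^2 - u^2)*(a\<bullet>a) - 4*t^2*(s\<bullet>s))
        + ((Sq^2 - u^2)*(b\<bullet>b) - 4*t^2*((P-M+q)\<bullet>(P-M+q))) + ((Sq^2 - u^2)*(a\<bullet>a) - 4*t^2*((s-R+N)\<bullet>(s-R+N))))
    + 2*t*(Sq+K*t)^2*((P-M)\<bullet>(P-M) + (R-N)\<bullet>(R-N))
    + 2*t*(((K*(Sq+u)) *\<^sub>R a - (Sq - K*t) *\<^sub>R P - (Sq + K*t) *\<^sub>R M + (2*K*t) *\<^sub>R q)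
          \<bullet>((K*(Sq+u)) *\<^sub>R a - (Sq - K*t) *\<^sub>R P - (Sq + K*t) *\<^sub>R M + (2*K*t) *\<^sub>R q))
    + 2*t*(((K*(Sq+u)) *\<^sub>R b - (Sq - K*t) *\<^sub>R R - (Sq + K*t) *\<^sub>R N - (2*K*t) *\<^sub>R s)
          \<bullet>((K*(Sq+u)) *\<^sub>R b - (Sq - K*t) *\<^sub>R R - (Sq + K*t) *\<^sub>R N - (2*K*t) *\<^sub>R s))"
  unfolding D2 D4 E2 E4 cyc u_def
  by (simp add: inner_simps inner_commute algebra_simps power2_eq_square)

lemma fin_aux:
  fixes T N c :: real
  shows "0 \<le> 4*c*N - 4*T \<Longrightarrow> T \<le> c*N"
  by linarith

lemma core_strict:
  fixes a P M q :: "'a::real_inner" and b R N s :: "'b::real_inner"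
    and Lxy K t \<beta> \<mu> D1 D2 D3 D4 E1 E2 E3 E4 :: real
  assumes K: "K > 0" and Lxy: "Lxy > 0" and t: "t > 0"
    and D2: "D2 = \<mu>*(a\<bullet>a) + a\<bullet>P - D1" and D4: "D4 = \<mu>*(a\<bullet>a) + a\<bullet>M - D3"
    and E2: "E2 = \<mu>*(b\<bullet>b) + b\<bullet>R - E1" and E4: "E4 = \<mu>*(b\<bullet>b) + b\<bullet>N - E3"
    and cyc: "E3 = a\<bullet>q - b\<bullet>s - D3 + D1 + E1"
    and g1: "0 \<le> 2*K*D1 - K*\<mu>*(a\<bullet>a) - P\<bullet>P" and g2: "0 \<le> 2*K*D2 - K*\<mu>*(a\<bullet>a) - P\<bullet>P"
    and g3: "0 \<le> 2*K*D3 - K*\<mu>*(a\<bullet>a) - M\<bullet>M" and g4: "0 \<le> 2*K*D4 - K*\<mu>*(a\<bullet>a) - M\<bullet>M"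
    and h1: "0 \<le> 2*K*E1 - K*\<mu>*(b\<bullet>b) - R\<bullet>R" and h2: "0 \<le> 2*K*E2 - K*\<mu>*(b\<bullet>b) - R\<bullet>R"
    and h3: "0 \<le> 2*K*E3 - K*\<mu>*(b\<bullet>b) - N\<bullet>N" and h4: "0 \<le> 2*K*E4 - K*\<mu>*(b\<bullet>b) - N\<bullet>N"
    and c1: "q\<bullet>q \<le> Lxy^2*(b\<bullet>b)" and c2: "s\<bullet>s \<le> Lxy^2*(a\<bullet>a)"
    and c3: "(P-M+q)\<bullet>(P-M+q) \<le> Lxy^2*(b\<bullet>b)" and c4: "(s-R+N)\<bullet>(s-R+N) \<le> Lxy^2*(a\<bullet>a)"
  shows "(\<beta> *\<^sub>R a - t *\<^sub>R P - t *\<^sub>R q)\<bullet>(\<beta> *\<^sub>R a - t *\<^sub>R P - t *\<^sub>R q)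
       + (\<beta> *\<^sub>R b - t *\<^sub>R R + t *\<^sub>R s)\<bullet>(\<beta> *\<^sub>R b - t *\<^sub>R R + t *\<^sub>R s)
     \<le> (\<beta>^2 + K*t*((K*t - 2*\<beta>) + sqrt((K*t - 2*\<beta>)^2 + 4*Lxy^2*t^2))/2 + Lxy^2*t^2)*(a\<bullet>a + b\<bullet>b)"
proof -
  define u where "u = K*t - 2*\<beta>"
  define Sq where "Sq = sqrt(u^2 + 4*Lxy^2*t^2)"
  have pos: "0 < 4*Lxy^2*t^2" using Lxy t by simp
  have Sq2: "Sq^2 = u^2 + 4*Lxy^2*t^2" unfolding Sq_def using pos
    by (simp add: add_nonneg_nonneg)
  have Sqpos: "Sq > 0" unfolding Sq_def using pos
    by (simp add: add_nonneg_pos)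
  have "sqrt (u^2) \<le> Sq" unfolding Sq_def using pos by (simp del: real_sqrt_abs)
  then have Squ: "\<bar>u\<bar> \<le> Sq" by simp
  have su1: "0 \<le> Sq + u" and su2: "0 \<le> Sq - u" using Squ by linarith+
  have X2: "Sq^2 - u^2 = 4*Lxy^2*t^2" using Sq2 by simp
  note id = core_identity[OF u_def D2 D4 E2 E4 cyc, of Sq]
  have t2: "0 \<le> 4*t^2" by simp
  have cc1: "0 \<le> (Sq^2 - u^2)*(b\<bullet>b) - 4*t^2*(q\<bullet>q)"
    using mult_left_mono[OF c1 t2] unfolding X2 by (simp add: algebra_simps)
  have cc2: "0 \<le> (Sq^2 - u^2)*(a\<bullet>a) - 4*t^2*(s\<bullet>s)"
    using mult_left_mono[OF c2 t2] unfolding X2 by (simp add: algebra_simps)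
  have cc3: "0 \<le> (Sq^2 - u^2)*(b\<bullet>b) - 4*t^2*((P-M+q)\<bullet>(P-M+q))"
    using mult_left_mono[OF c3 t2] unfolding X2 by (simp add: algebra_simps)
  have cc4: "0 \<le> (Sq^2 - u^2)*(a\<bullet>a) - 4*t^2*((s-R+N)\<bullet>(s-R+N))"
    using mult_left_mono[OF c4 t2] unfolding X2 by (simp add: algebra_simps)
  have SK: "0 \<le> Sq + K*t" using Sqpos K t by simp
  define A where "A = Sq + u"
  define B where "B = Sq - u"
  define C where "C = Sq + K*t"
  have "0 \<le> 2*K*Sq*((4*\<beta>^2 + 2*K*t*(u+Sq) + (Sq^2 - u^2))*(a\<bullet>a + b\<bullet>b)
      - 4*((\<beta> *\<^sub>R a - t *\<^sub>R P - t *\<^sub>R q)\<bullet>(\<beta> *\<^sub>R a - t *\<^sub>R P - t *\<^sub>R q)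
         + (\<beta> *\<^sub>R b - t *\<^sub>R R + t *\<^sub>R s)\<bullet>(\<beta> *\<^sub>R b - t *\<^sub>R R + t *\<^sub>R s)))"
    (is "0 \<le> ?c * ?X")
    unfolding id A_def[symmetric] B_def[symmetric] C_def[symmetric]
    using t K SK su1 su2 A_def B_def C_def g1 g2 g3 g4 h1 h2 h3 h4 cc1 cc2 cc3 cc4
    by (intro add_nonneg_nonneg mult_nonneg_nonneg; simp)
  then have "0 \<le> (4*\<beta>^2 + 2*K*t*(u+Sq) + (Sq^2 - u^2))*(a\<bullet>a + b\<bullet>b)
      - 4*((\<beta> *\<^sub>R a - t *\<^sub>R P - t *\<^sub>R q)\<bullet>(\<beta> *\<^sub>R a - t *\<^sub>R P - t *\<^sub>R q)
         + (\<beta> *\<^sub>R b - t *\<^sub>R R + t *\<^sub>R s)\<bullet>(\<beta> *\<^sub>R b - t *\<^sub>R R + t *\<^sub>R s))"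
    using mult_le_cancel_left_pos[of ?c 0 ?X] K Sqpos by simp
  moreover have "4*\<beta>^2 + 2*K*t*(u+Sq) + (Sq^2 - u^2) = 4*(\<beta>^2 + K*t*(u+Sq)/2 + Lxy^2*t^2)"
    unfolding X2 by (simp add: algebra_simps)
  ultimately have "0 \<le> 4*(\<beta>^2 + K*t*(u+Sq)/2 + Lxy^2*t^2)*(a\<bullet>a + b\<bullet>b)
      - 4*((\<beta> *\<^sub>R a - t *\<^sub>R P - t *\<^sub>R q)\<bullet>(\<beta> *\<^sub>R a - t *\<^sub>R P - t *\<^sub>R q)
         + (\<beta> *\<^sub>R b - t *\<^sub>R R + t *\<^sub>R s)\<bullet>(\<beta> *\<^sub>R b - t *\<^sub>R R + t *\<^sub>R s))"
    by simp
  from fin_aux[OF this] show ?thesis unfolding u_def[symmetric] Sq_def[symmetric] .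
qed

lemma core_ineq:
  fixes a P M q :: "'a::real_inner" and b R N s :: "'b::real_inner"
    and Lxy K t \<beta> \<mu> D1 D2 D3 D4 E1 E2 E3 E4 :: real
  assumes K: "K \<ge> 0" and Lxy: "Lxy \<ge> 0" and t: "t > 0"
    and D2: "D2 = \<mu>*(a\<bullet>a) + a\<bullet>P - D1" and D4: "D4 = \<mu>*(a\<bullet>a) + a\<bullet>M - D3"
    and E2: "E2 = \<mu>*(b\<bullet>b) + b\<bullet>R - E1" and E4: "E4 = \<mu>*(b\<bullet>b) + b\<bullet>N - E3"
    and cyc: "E3 = a\<bullet>q - b\<bullet>s - D3 + D1 + E1"
    and g1: "0 \<le> 2*K*D1 - K*\<mu>*(a\<bullet>a) - P\<bullet>P" and g2: "0 \<le> 2*K*D2 - K*\<mu>*(a\<bullet>a) - P\<bullet>P"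
    and g3: "0 \<le> 2*K*D3 - K*\<mu>*(a\<bullet>a) - M\<bullet>M" and g4: "0 \<le> 2*K*D4 - K*\<mu>*(a\<bullet>a) - M\<bullet>M"
    and h1: "0 \<le> 2*K*E1 - K*\<mu>*(b\<bullet>b) - R\<bullet>R" and h2: "0 \<le> 2*K*E2 - K*\<mu>*(b\<bullet>b) - R\<bullet>R"
    and h3: "0 \<le> 2*K*E3 - K*\<mu>*(b\<bullet>b) - N\<bullet>N" and h4: "0 \<le> 2*K*E4 - K*\<mu>*(b\<bullet>b) - N\<bullet>N"
    and t1: "0 \<le> 2*D1 - \<mu>*(a\<bullet>a)" and t2: "0 \<le> 2*D2 - \<mu>*(a\<bullet>a)"
    and t3: "0 \<le> 2*D3 - \<mu>*(a\<bullet>a)" and t4: "0 \<le> 2*D4 - \<mu>*(a\<bullet>a)"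
    and u1: "0 \<le> 2*E1 - \<mu>*(b\<bullet>b)" and u2: "0 \<le> 2*E2 - \<mu>*(b\<bullet>b)"
    and u3: "0 \<le> 2*E3 - \<mu>*(b\<bullet>b)" and u4: "0 \<le> 2*E4 - \<mu>*(b\<bullet>b)"
    and c1: "q\<bullet>q \<le> Lxy^2*(b\<bullet>b)" and c2: "s\<bullet>s \<le> Lxy^2*(a\<bullet>a)"
    and c3: "(P-M+q)\<bullet>(P-M+q) \<le> Lxy^2*(b\<bullet>b)" and c4: "(s-R+N)\<bullet>(s-R+N) \<le> Lxy^2*(a\<bullet>a)"
  shows "(\<beta> *\<^sub>R a - t *\<^sub>R P - t *\<^sub>R q)\<bullet>(\<beta> *\<^sub>R a - t *\<^sub>R P - t *\<^sub>R q)
       + (\<beta> *\<^sub>R b - t *\<^sub>R R + t *\<^sub>R s)\<bullet>(\<beta> *\<^sub>R b - t *\<^sub>R R + t *\<^sub>R s)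
     \<le> (\<beta>^2 + K*t*((K*t - 2*\<beta>) + sqrt((K*t - 2*\<beta>)^2 + 4*Lxy^2*t^2))/2 + Lxy^2*t^2)*(a\<bullet>a + b\<bullet>b)"
    (is "?T \<le> ?f K Lxy")
proof -
  define f where "f = (\<lambda>e::real. (\<beta>^2 + (K+e)*t*(((K+e)*t - 2*\<beta>) + sqrt(((K+e)*t - 2*\<beta>)^2 + 4*(Lxy+e)^2*t^2))/2 + (Lxy+e)^2*t^2)*(a\<bullet>a + b\<bullet>b))"
  have bound: "?T \<le> f e" if e: "e > 0" for e
  proof -
    have lift: "0 \<le> 2*(K+e)*D - (K+e)*\<mu>*(d\<bullet>d) - G\<bullet>G"
      if "0 \<le> 2*K*D - K*\<mu>*(d\<bullet>d) - G\<bullet>G" "0 \<le> 2*D - \<mu>*(d\<bullet>d)" for D and d G :: "'c::real_inner"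
    proof -
      have "0 \<le> e*(2*D - \<mu>*(d\<bullet>d))" using that e by simp
      then show ?thesis using that(1) by (simp add: algebra_simps)
    qed
    have sq: "Lxy^2 \<le> (Lxy+e)^2" using Lxy e by (simp add: power_mono)
    have liftc: "x \<le> (Lxy+e)^2 * y" if "x \<le> Lxy^2 * y" "0 \<le> y" for x y :: real
      using that mult_right_mono[OF sq that(2)] by linarith
    show ?thesis unfolding f_def
      by (rule core_strict[OF _ _ t D2 D4 E2 E4 cyc lift[OF g1 t1] lift[OF g2 t2] lift[OF g3 t3] lift[OF g4 t4]
          lift[OF h1 u1] lift[OF h2 u2] lift[OF h3 u3] lift[OF h4 u4]
          liftc[OF c1] liftc[OF c2] liftc[OF c3] liftc[OF c4]]) (use K Lxy e in auto)
  qed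
  have lim: "(f \<longlongrightarrow> f 0) (at_right 0)"
    unfolding f_def by (intro tendsto_intros) auto
  have "?T \<le> f 0"
    using lim tendsto_const[of ?T "at_right (0::real)"]
    by (rule tendsto_le[OF trivial_limit_at_right_real]) (auto simp: eventually_at_right_less bound eventually_at_right_field intro: exI[of _ 1])
  then show ?thesis unfolding f_def by simp
qed


lemma sq_bound:
  fixes v :: "'a::real_inner" and w :: "'b::real_inner"
  assumes "norm v \<le> c * norm w"
  shows "v \<bullet> v \<le> c^2 * (w \<bullet> w)"
proof -
  have "(norm v)^2 \<le> (c * norm w)^2" using assms by (simp add: power_mono)
  then show ?thesis by (simp add: power2_norm_eq_inner power_mult_distrib)
qed

lemma sqsym:
  fixes A B X Y :: "'a::real_inner"
  shows "(A - B - c *\<^sub>R (X - Y)) \<bullet> (A - B - c *\<^sub>R (X - Y)) = (B - A - c *\<^sub>R (Y - X)) \<bullet> (B - A - c *\<^sub>R (Y - X))"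
proof -
  show ?thesis by (simp add: inner_simps inner_commute algebra_simps)
qed

lemma dsym:
  fixes X Y :: "'a::real_inner"
  shows "(X - Y) \<bullet> (X - Y) = (Y - X) \<bullet> (Y - X)"
proof -
  show ?thesis by (simp add: inner_simps inner_commute algebra_simps)
qed

theorem theorem2p2:
  fixes F :: "'n::euclidean_space \<Rightarrow> 'm::euclidean_space \<Rightarrow> real"
    and Lx Ly Lxy mux muy t :: real
    and xs x1 :: 'n and ys y1 :: 'm
  assumes "Lx > 0" "Ly > 0" "Lxy \<ge> 0"
    and "0 < mux" "mux \<le> Lx" "0 < muy" "muy \<le> Ly"
    and "F \<in> func_class Lx Ly Lxy mux muy"
    and "is_saddle_point F xs ys"
    and "0 < t" "t < 2 * min mux muy / (min mux muy * max Lx Ly + Lxy\<^sup>2)"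
  shows
    "let L = max Lx Ly; \<mu> = min mux muy;
         x2 = x1 - t *\<^sub>R grad_x F x1 y1;
         y2 = y1 + t *\<^sub>R grad_y F x1 y1;
         \<alpha> = 1 + (L\<^sup>2 + \<mu>\<^sup>2 + 2 * Lxy\<^sup>2) * t\<^sup>2 / 2 - (L + \<mu>) * t
             + (L - \<mu>) * t * sqrt ((L * t + \<mu> * t - 2)\<^sup>2 + 4 * Lxy\<^sup>2 * t\<^sup>2) / 2
     in (norm (x2 - xs))\<^sup>2 + (norm (y2 - ys))\<^sup>2
          \<le> \<alpha> * ((norm (x1 - xs))\<^sup>2 + (norm (y1 - ys))\<^sup>2)"
proof -
  define L where "L = max Lx Ly"
  define \<mu> where "\<mu> = min mux muy"
  have Fc: "F \<in> func_class Lx Ly Lxy mux muy" by (fact assms(8))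
  have diff: "\<forall>p. (\<lambda>(x, y). F x y) differentiable (at p)"
    using Fc unfolding func_class_def by blast
  have lipx: "\<forall>x1 x2 y. norm (grad_x F x2 y - grad_x F x1 y) \<le> Lx * norm (x2 - x1)"
    using Fc unfolding func_class_def by blast
  have lipy: "\<forall>x y1 y2. norm (grad_y F x y2 - grad_y F x y1) \<le> Ly * norm (y2 - y1)"
    using Fc unfolding func_class_def by blast
  have lipxy: "\<forall>x y1 y2. norm (grad_x F x y2 - grad_x F x y1) \<le> Lxy * norm (y2 - y1)"
    using Fc unfolding func_class_def by blast
  have lipyx: "\<forall>x1 x2 y. norm (grad_y F x2 y - grad_y F x1 y) \<le> Lxy * norm (x2 - x1)"
    using Fc unfolding func_class_def by blast
  have cvx: "\<forall>y. convex_on UNIV (\<lambda>x. F x y - mux / 2 * (norm x)\<^sup>2)"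
    using Fc unfolding func_class_def by blast
  have ccv: "\<forall>x. concave_on UNIV (\<lambda>y. F x y + muy / 2 * (norm y)\<^sup>2)"
    using Fc unfolding func_class_def by blast
  have muL: "\<mu> \<le> L" "\<mu> \<le> mux" "\<mu> \<le> muy" "Lx \<le> L" "Ly \<le> L"
    using assms unfolding \<mu>_def L_def by auto
  have dx: "((\<lambda>u. F u y) has_derivative (\<lambda>h. grad_x F x y \<bullet> h)) (at x)" for x y
  proof -
    obtain D where D: "((\<lambda>(x, y). F x y) has_derivative D) (at (x, y))"
      using diff differentiable_def by blast
    have "((\<lambda>u. (u, y)) has_derivative (\<lambda>h. (h, 0))) (at x)"
      by (intro derivative_eq_intros) auto
    from has_derivative_compose[OF this D]
    have "((\<lambda>u. F u y) has_derivative (\<lambda>h. D (h, 0))) (at x)" by simp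
    from grad_the[OF this] show ?thesis unfolding grad_x_def .
  qed
  have dy: "((\<lambda>v. F x v) has_derivative (\<lambda>h. grad_y F x y \<bullet> h)) (at y)" for x y
  proof -
    obtain D where D: "((\<lambda>(x, y). F x y) has_derivative D) (at (x, y))"
      using diff differentiable_def by blast
    have "((\<lambda>v. (x, v)) has_derivative (\<lambda>h. (0, h))) (at y)"
      by (intro derivative_eq_intros) auto
    from has_derivative_compose[OF this D]
    have "((\<lambda>v. F x v) has_derivative (\<lambda>h. D (0, h))) (at y)" by simp
    from grad_the[OF this] show ?thesis unfolding grad_y_def .
  qed
  have dy': "((\<lambda>v. - F x v) has_derivative (\<lambda>h. (- grad_y F x y) \<bullet> h)) (at y)" for x y
    using has_derivative_minus[OF dy[of x y]] by (rule has_derivative_eq_rhs) (simp add: fun_eq_iff)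
  have sad: "\<forall>x y. F xs y \<le> F xs ys \<and> F xs ys \<le> F x ys"
    using assms(9) unfolding is_saddle_point_def by blast
  have zx: "grad_x F xs ys = 0"
  proof -
    have "(\<lambda>h. grad_x F xs ys \<bullet> h) = (\<lambda>h. 0)"
      by (rule has_derivative_local_min[OF dx]) (use sad in \<open>auto intro: always_eventually\<close>)
    then have "grad_x F xs ys \<bullet> grad_x F xs ys = 0" by metis
    then show ?thesis by simp
  qed
  have zy: "grad_y F xs ys = 0"
  proof -
    have "(\<lambda>h. (- grad_y F xs ys) \<bullet> h) = (\<lambda>h. 0)"
      by (rule has_derivative_local_min[OF dy']) (use sad in \<open>auto intro: always_eventually\<close>)
    then have "(- grad_y F xs ys) \<bullet> (- grad_y F xs ys) = 0" by metis
    then show ?thesis by simp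
  qed
  have scx: "F x y + grad_x F x y \<bullet> (z - x) + \<mu>/2 * norm (z - x)^2 \<le> F z y" for x y z
  proof -
    have "F x y + grad_x F x y \<bullet> (z - x) + mux/2 * norm (z - x)^2 \<le> F z y"
      using strong_first[where f="\<lambda>u. F u y" and g="\<lambda>u. grad_x F u y" and m=mux, OF _ dx] cvx by blast
    moreover have "\<mu>/2 * norm (z - x)^2 \<le> mux/2 * norm (z - x)^2"
      using muL by (intro mult_right_mono) auto
    ultimately show ?thesis by linarith
  qed
  have scy: "- F x y + (- grad_y F x y) \<bullet> (z - y) + \<mu>/2 * norm (z - y)^2 \<le> - F x z" for x y z
  proof -
    have cv: "convex_on UNIV (\<lambda>v. - F x v - muy/2 * (norm v)^2)"
      using ccv unfolding concave_on_def by (simp add: algebra_simps)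
    have "- F x y + (- grad_y F x y) \<bullet> (z - y) + muy/2 * norm (z - y)^2 \<le> - F x z"
      using strong_first[where f="\<lambda>v. - F x v" and g="\<lambda>v. - grad_y F x v" and m=muy, OF cv dy'] by blast
    moreover have "\<mu>/2 * norm (z - y)^2 \<le> muy/2 * norm (z - y)^2"
      using muL by (intro mult_right_mono) auto
    ultimately show ?thesis by linarith
  qed
  have GLx: "0 \<le> 2*(L-\<mu>)*(F x y - F x' y - grad_x F x' y \<bullet> (x - x')) - (L-\<mu>)*\<mu>*((x-x')\<bullet>(x-x'))
      - (grad_x F x y - grad_x F x' y - \<mu> *\<^sub>R (x-x')) \<bullet> (grad_x F x y - grad_x F x' y - \<mu> *\<^sub>R (x-x'))" for x x' y
  proof (rule GL[where f="\<lambda>u. F u y" and g="\<lambda>u. grad_x F u y"])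
    show "((\<lambda>u. F u y) has_derivative (\<lambda>h. grad_x F x y \<bullet> h)) (at x)" for x by (rule dx)
    show "norm (grad_x F x y - grad_x F x' y) \<le> L * norm (x - x')" for x x'
      using lipx muL(4) by (meson norm_ge_zero mult_right_mono order_trans)
    show "F x y + grad_x F x y \<bullet> (z - x) + \<mu>/2 * norm (z - x)^2 \<le> F z y" for x z by (rule scx)
    show "\<mu> \<le> L" by (rule muL(1))
  qed
  have GLy: "0 \<le> 2*(L-\<mu>)*((- F x y) - (- F x y') - (- grad_y F x y') \<bullet> (y - y')) - (L-\<mu>)*\<mu>*((y-y')\<bullet>(y-y'))
      - ((- grad_y F x y) - (- grad_y F x y') - \<mu> *\<^sub>R (y-y')) \<bullet> ((- grad_y F x y) - (- grad_y F x y') - \<mu> *\<^sub>R (y-y'))" for x y y'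
  proof (rule GL[where f="\<lambda>v. - F x v" and g="\<lambda>v. - grad_y F x v"])
    show "((\<lambda>v. - F x v) has_derivative (\<lambda>h. (- grad_y F x y) \<bullet> h)) (at y)" for y by (rule dy')
    show "norm ((- grad_y F x y) - (- grad_y F x y')) \<le> L * norm (y - y')" for y y'
    proof -
      have "norm ((- grad_y F x y) - (- grad_y F x y')) = norm (grad_y F x y - grad_y F x y')"
        by (metis minus_diff_eq minus_diff_minus norm_minus_cancel)
      then show ?thesis using lipy muL(5) by (metis norm_ge_zero mult_right_mono order_trans)
    qed
    show "- F x y + (- grad_y F x y) \<bullet> (z - y) + \<mu>/2 * norm (z - y)^2 \<le> - F x z" for y z by (rule scy)
    show "\<mu> \<le> L" by (rule muL(1))
  qed
  have tx: "0 \<le> 2*(F x y - F x' y - grad_x F x' y \<bullet> (x - x')) - \<mu>*((x-x')\<bullet>(x-x'))" for x x' y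
    using scx[where x=x' and y=y and z=x] by (simp add: power2_norm_eq_inner algebra_simps)
  have ty: "0 \<le> 2*((- F x y) - (- F x y') - (- grad_y F x y') \<bullet> (y - y')) - \<mu>*((y-y')\<bullet>(y-y'))" for x y y'
    using scy[where x=x and y=y' and z=y] by (simp add: power2_norm_eq_inner algebra_simps)
  define a where "a = x1 - xs"
  define b where "b = y1 - ys"
  define P where "P = grad_x F x1 y1 - grad_x F xs y1 - \<mu> *\<^sub>R (x1 - xs)"
  define M where "M = grad_x F x1 ys - grad_x F xs ys - \<mu> *\<^sub>R (x1 - xs)"
  define q where "q = grad_x F xs y1 - grad_x F xs ys"
  define R where "R = (- grad_y F x1 y1) - (- grad_y F x1 ys) - \<mu> *\<^sub>R (y1 - ys)"
  define N where "N = (- grad_y F xs y1) - (- grad_y F xs ys) - \<mu> *\<^sub>R (y1 - ys)"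
  define s where "s = grad_y F x1 ys - grad_y F xs ys"
  define D1 where "D1 = F x1 y1 - F xs y1 - grad_x F xs y1 \<bullet> (x1 - xs)"
  define D2 where "D2 = F xs y1 - F x1 y1 - grad_x F x1 y1 \<bullet> (xs - x1)"
  define D3 where "D3 = F x1 ys - F xs ys - grad_x F xs ys \<bullet> (x1 - xs)"
  define D4 where "D4 = F xs ys - F x1 ys - grad_x F x1 ys \<bullet> (xs - x1)"
  define E1 where "E1 = (- F x1 y1) - (- F x1 ys) - (- grad_y F x1 ys) \<bullet> (y1 - ys)"
  define E2 where "E2 = (- F x1 ys) - (- F x1 y1) - (- grad_y F x1 y1) \<bullet> (ys - y1)"
  define E3 where "E3 = (- F xs y1) - (- F xs ys) - (- grad_y F xs ys) \<bullet> (y1 - ys)"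
  define E4 where "E4 = (- F xs ys) - (- F xs y1) - (- grad_y F xs y1) \<bullet> (ys - y1)"
  define K where "K = L - \<mu>"
  define \<beta> where "\<beta> = 1 - \<mu> * t"
  have K0: "K \<ge> 0" using muL unfolding K_def by simp
  have rD2: "D2 = \<mu>*(a\<bullet>a) + a\<bullet>P - D1" unfolding D1_def D2_def a_def P_def
    by (simp add: inner_simps inner_commute algebra_simps)
  have rD4: "D4 = \<mu>*(a\<bullet>a) + a\<bullet>M - D3" unfolding D3_def D4_def a_def M_def
    by (simp add: inner_simps inner_commute algebra_simps)
  have rE2: "E2 = \<mu>*(b\<bullet>b) + b\<bullet>R - E1" unfolding E1_def E2_def b_def R_def
    by (simp add: inner_simps inner_commute algebra_simps)
  have rE4: "E4 = \<mu>*(b\<bullet>b) + b\<bullet>N - E3" unfolding E3_def E4_def b_def N_def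
    by (simp add: inner_simps inner_commute algebra_simps)
  have cyc: "E3 = a\<bullet>q - b\<bullet>s - D3 + D1 + E1" unfolding E3_def E1_def D3_def D1_def a_def b_def q_def s_def
    by (simp add: inner_simps inner_commute algebra_simps)
  have g1: "0 \<le> 2*K*D1 - K*\<mu>*(a\<bullet>a) - P\<bullet>P"
    using GLx[where x=x1 and x'=xs and y=y1] unfolding K_def D1_def a_def P_def .
  have g2: "0 \<le> 2*K*D2 - K*\<mu>*(a\<bullet>a) - P\<bullet>P"
    using GLx[where x=xs and x'=x1 and y=y1] unfolding K_def D2_def a_def P_def
    by (simp only: sqsym[of "grad_x F xs y1"] dsym[of xs])
  have g3: "0 \<le> 2*K*D3 - K*\<mu>*(a\<bullet>a) - M\<bullet>M"
    using GLx[where x=x1 and x'=xs and y=ys] unfolding K_def D3_def a_def M_def .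
  have g4: "0 \<le> 2*K*D4 - K*\<mu>*(a\<bullet>a) - M\<bullet>M"
    using GLx[where x=xs and x'=x1 and y=ys] unfolding K_def D4_def a_def M_def
    by (simp only: sqsym[of "grad_x F xs ys"] dsym[of xs])
  have h1: "0 \<le> 2*K*E1 - K*\<mu>*(b\<bullet>b) - R\<bullet>R"
    using GLy[where x=x1 and y=y1 and y'=ys] unfolding K_def E1_def b_def R_def .
  have h2: "0 \<le> 2*K*E2 - K*\<mu>*(b\<bullet>b) - R\<bullet>R"
    using GLy[where x=x1 and y=ys and y'=y1] unfolding K_def E2_def b_def R_def
    by (simp only: sqsym[of "- grad_y F x1 ys"] dsym[of ys])
  have h3: "0 \<le> 2*K*E3 - K*\<mu>*(b\<bullet>b) - N\<bullet>N"
    using GLy[where x=xs and y=y1 and y'=ys] unfolding K_def E3_def b_def N_def .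
  have h4: "0 \<le> 2*K*E4 - K*\<mu>*(b\<bullet>b) - N\<bullet>N"
    using GLy[where x=xs and y=ys and y'=y1] unfolding K_def E4_def b_def N_def
    by (simp only: sqsym[of "- grad_y F xs ys"] dsym[of ys])
  have t1: "0 \<le> 2*D1 - \<mu>*(a\<bullet>a)" using tx[where x=x1 and x'=xs and y=y1] unfolding D1_def a_def .
  have t2: "0 \<le> 2*D2 - \<mu>*(a\<bullet>a)" using tx[where x=xs and x'=x1 and y=y1] unfolding D2_def a_def by (simp only: dsym[of xs])
  have t3: "0 \<le> 2*D3 - \<mu>*(a\<bullet>a)" using tx[where x=x1 and x'=xs and y=ys] unfolding D3_def a_def .
  have t4: "0 \<le> 2*D4 - \<mu>*(a\<bullet>a)" using tx[where x=xs and x'=x1 and y=ys] unfolding D4_def a_def by (simp only: dsym[of xs])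
  have u1: "0 \<le> 2*E1 - \<mu>*(b\<bullet>b)" using ty[where x=x1 and y=y1 and y'=ys] unfolding E1_def b_def .
  have u2: "0 \<le> 2*E2 - \<mu>*(b\<bullet>b)" using ty[where x=x1 and y=ys and y'=y1] unfolding E2_def b_def by (simp only: dsym[of ys])
  have u3: "0 \<le> 2*E3 - \<mu>*(b\<bullet>b)" using ty[where x=xs and y=y1 and y'=ys] unfolding E3_def b_def .
  have u4: "0 \<le> 2*E4 - \<mu>*(b\<bullet>b)" using ty[where x=xs and y=ys and y'=y1] unfolding E4_def b_def by (simp only: dsym[of ys])
  have c1: "q\<bullet>q \<le> Lxy^2*(b\<bullet>b)" unfolding q_def b_def
    using lipxy by (intro sq_bound) blast
  have c2: "s\<bullet>s \<le> Lxy^2*(a\<bullet>a)" unfolding s_def a_def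
    using lipyx by (intro sq_bound) blast
  have c3: "(P-M+q)\<bullet>(P-M+q) \<le> Lxy^2*(b\<bullet>b)"
  proof -
    have "P - M + q = grad_x F x1 y1 - grad_x F x1 ys" unfolding P_def M_def q_def by (simp add: algebra_simps)
    then show ?thesis unfolding b_def using lipxy by (simp add: sq_bound)
  qed
  have c4: "(s-R+N)\<bullet>(s-R+N) \<le> Lxy^2*(a\<bullet>a)"
  proof -
    have "s - R + N = grad_y F x1 y1 - grad_y F xs y1" unfolding s_def R_def N_def by (simp add: algebra_simps)
    then show ?thesis unfolding a_def using lipyx by (simp add: sq_bound)
  qed
  have main: "(\<beta> *\<^sub>R a - t *\<^sub>R P - t *\<^sub>R q)\<bullet>(\<beta> *\<^sub>R a - t *\<^sub>R P - t *\<^sub>R q)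
       + (\<beta> *\<^sub>R b - t *\<^sub>R R + t *\<^sub>R s)\<bullet>(\<beta> *\<^sub>R b - t *\<^sub>R R + t *\<^sub>R s)
     \<le> (\<beta>^2 + K*t*((K*t - 2*\<beta>) + sqrt((K*t - 2*\<beta>)^2 + 4*Lxy^2*t^2))/2 + Lxy^2*t^2)*(a\<bullet>a + b\<bullet>b)"
    by (rule core_ineq[OF K0 assms(3) assms(10) rD2 rD4 rE2 rE4 cyc g1 g2 g3 g4 h1 h2 h3 h4
          t1 t2 t3 t4 u1 u2 u3 u4 c1 c2 c3 c4])
  have ex: "x1 - t *\<^sub>R grad_x F x1 y1 - xs = \<beta> *\<^sub>R a - t *\<^sub>R P - t *\<^sub>R q"
    unfolding \<beta>_def a_def P_def q_def using zx by (simp add: algebra_simps)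
  have ey: "y1 + t *\<^sub>R grad_y F x1 y1 - ys = \<beta> *\<^sub>R b - t *\<^sub>R R + t *\<^sub>R s"
    unfolding \<beta>_def b_def R_def s_def using zy by (simp add: algebra_simps)
  have ku: "K*t - 2*\<beta> = L * t + \<mu> * t - 2" unfolding K_def \<beta>_def by (simp add: algebra_simps)
  have alpha: "\<beta>^2 + K*t*((K*t - 2*\<beta>) + sqrt((K*t - 2*\<beta>)^2 + 4*Lxy^2*t^2))/2 + Lxy^2*t^2
      = 1 + (L\<^sup>2 + \<mu>\<^sup>2 + 2 * Lxy\<^sup>2) * t\<^sup>2 / 2 - (L + \<mu>) * t
             + (L - \<mu>) * t * sqrt ((L * t + \<mu> * t - 2)\<^sup>2 + 4 * Lxy\<^sup>2 * t\<^sup>2) / 2"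
  proof -
    have gen: "(1 - \<mu>*t)^2 + (L-\<mu>)*t*((L*t+\<mu>*t-2) + S)/2 + Lxy^2*t^2 = 1 + (L\<^sup>2 + \<mu>\<^sup>2 + 2 * Lxy\<^sup>2) * t\<^sup>2 / 2 - (L + \<mu>) * t + (L - \<mu>) * t * S / 2" for S
      by (simp add: field_simps power2_eq_square)
    show ?thesis unfolding ku unfolding K_def \<beta>_def by (rule gen)
  qed
  show ?thesis
    unfolding Let_def L_def[symmetric] \<mu>_def[symmetric] ex ey
    using main unfolding alpha a_def[symmetric] b_def[symmetric]
    by (simp add: power2_norm_eq_inner)
qed

end
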